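(* Let $f\in\mathbb{C}[x_0,\dots,x_3]_4$ be a quaternary quartic form that is not apolar to any quadric, and let $\Gamma\subset\mathbb{P}^3$ be a scheme of length ten apolar to $f$. Then $\Gamma$ imposes independent conditions on cubics, i.e. $I_{\Gamma,3}$ is $10$-dimensional.
   Context: $T=\mathbb{C}[y_0,\dots,y_3]$ acts on $S=\mathbb{C}[x_0,\dots,x_3]$ by differentiation; $f^\perp=\{g\in T:g(f)=0\}$; "not apolar to any quadric" means $f^\perp_2=0$. $\mathbb{P}^3=\mathbb{P}(S_1)$ has coordinate ring $T$, and $\Gamma$ is apolar to $f$ if its saturated ideal $I_\Gamma\subset f^\perp$. *)

theory Defs
  imports Complex_Main "HOL-Library.Poly_Mapping" "HOL-Library.Numeral_Type"
begin

text \<open>The same type is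
used both for S = C[x_0..x_3] and for T = C[y_0..y_3].\<close>

type_synonym mon = "4 \<Rightarrow>\<^sub>0 nat"
type_synonym pol = "mon \<Rightarrow>\<^sub>0 complex"

definition mdeg :: "mon \<Rightarrow> nat" where
  "mdeg m = (\<Sum>i\<in>UNIV. Poly_Mapping.lookup m i)"

definition forms :: "nat \<Rightarrow> pol set" where
  "forms d = {p. \<forall>m\<in>Poly_Mapping.keys p. mdeg m = d}"

definition cscale :: "complex \<Rightarrow> pol \<Rightarrow> pol" where
  "cscale c p = Poly_Mapping.map (\<lambda>x. c * x) p"

definition cdim :: "pol set \<Rightarrow> nat" where
  "cdim V = vector_space.dim cscale V"

text \<open>Apolarity action: y^a acts on x^b as the differential operator
  \<partial>^a, i.e. y^a (x^b) = (\<Prod>i. b_i!/(b_i-a_i)!) x^(b-a) if a \<le> b, else 0.\<close>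
definition dcoeff :: "mon \<Rightarrow> mon \<Rightarrow> complex" where
  "dcoeff a b = (if (\<forall>i. Poly_Mapping.lookup a i \<le> Poly_Mapping.lookup b i)
     then (\<Prod>i\<in>UNIV. of_nat (fact (Poly_Mapping.lookup b i) div fact (Poly_Mapping.lookup b i - Poly_Mapping.lookup a i)))
     else 0)"

definition contract :: "pol \<Rightarrow> pol \<Rightarrow> pol" where
  "contract g f = (\<Sum>a\<in>Poly_Mapping.keys g. \<Sum>b\<in>Poly_Mapping.keys f.
      Poly_Mapping.single (b - a) (Poly_Mapping.lookup g a * Poly_Mapping.lookup f b * dcoeff a b))"

definition perp :: "pol \<Rightarrow> pol set" where
  "perp f = {g. contract g f = 0}"

definition hcomp :: "nat \<Rightarrow> pol \<Rightarrow> pol" where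
  "hcomp d p = (\<Sum>m\<in>Poly_Mapping.keys p. if mdeg m = d then Poly_Mapping.single m (Poly_Mapping.lookup p m) else 0)"

definition homogeneous_ideal :: "pol set \<Rightarrow> bool" where
  "homogeneous_ideal I \<longleftrightarrow> 0 \<in> I \<and> (\<forall>p\<in>I. \<forall>q\<in>I. p + q \<in> I)
     \<and> (\<forall>p\<in>I. \<forall>r. r * p \<in> I) \<and> (\<forall>p\<in>I. \<forall>d. hcomp d p \<in> I)"

text \<open>Saturation with respect to the irrelevant ideal m = (y_0,..,y_3):
  I : m^\<infinity> = I, i.e. if all monomials of some degree k multiply g into I then g \<in> I.\<close>
definition saturated :: "pol set \<Rightarrow> bool" where
  "saturated I \<longleftrightarrow> (\<forall>g. (\<exists>k. \<forall>m. mdeg m = k \<longrightarrow> Poly_Mapping.single m 1 * g \<in> I) \<longrightarrow> g \<in> I)"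

text \<open>A zero-dimensional subscheme of P^3 of length n, given by its saturated homogeneous
  ideal: the Hilbert function of T/I_\<Gamma> is eventually equal to n.\<close>
definition scheme_ideal_of_length :: "nat \<Rightarrow> pol set \<Rightarrow> bool" where
  "scheme_ideal_of_length n I \<longleftrightarrow> homogeneous_ideal I \<and> saturated I \<and>
     (\<exists>d0. \<forall>d\<ge>d0. cdim (forms d) - cdim (I \<inter> forms d) = n)"

end

theory Submission
  imports Defs
begin

lemma cscale_mult: "cscale c p = Poly_Mapping.single 0 c * p"
  by (simp add: cscale_def mult_map_scale_conv_mult)

interpretation V: vector_space cscale
  apply unfold_locales
  apply (simp_all add: cscale_mult algebra_simps single_add)
  apply (simp add: mult_single flip: mult.assoc)
  done

lemma exhaust4: fixes x :: 4 shows "x = 0 \<or> x = 1 \<or> x = 2 \<or> x = 3"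
proof (induct x)
  case (of_int z)
  then have "z = 0 \<or> z = 1 \<or> z = 2 \<or> z = 3" by fastforce
  then show ?case by auto
qed

lemma univ4: "(UNIV :: 4 set) = {0,1,2,3}"
proof (rule set_eqI)
  fix x :: 4 show "x \<in> UNIV \<longleftrightarrow> x \<in> {0,1,2,3}" using exhaust4[of x] by blast
qed

lemma distinct4: "(0::4) \<noteq> 1" "(0::4) \<noteq> 2" "(0::4) \<noteq> 3" "(1::4) \<noteq> 2" "(1::4) \<noteq> 3" "(2::4) \<noteq> 3"
  by simp_all

lemma sum4: "sum f (UNIV::4 set) = f 0 + f 1 + f 2 + f (3::4)"
  unfolding univ4 using distinct4
  by (simp add: sum.insert_if add.assoc)

lemma mdeg4: "mdeg m = Poly_Mapping.lookup m 0 + Poly_Mapping.lookup m 1 + Poly_Mapping.lookup m 2 + Poly_Mapping.lookup m 3"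
  unfolding mdeg_def sum4 ..

lemma mdeg_add: "mdeg (a + b) = mdeg a + mdeg b"
  unfolding mdeg_def lookup_add sum.distrib ..

lemma lookup_cscale[simp]: "Poly_Mapping.lookup (cscale c p) m = c * Poly_Mapping.lookup p m"
  by (simp add: cscale_def Poly_Mapping.map.rep_eq when_def)

lemma keys_cscale: "Poly_Mapping.keys (cscale c p) \<subseteq> Poly_Mapping.keys p"
  by (auto simp: in_keys_iff)

lemma forms_add: assumes "p \<in> forms d" "q \<in> forms d" shows "p + q \<in> forms d"
  using assms keys_add[of p q] unfolding forms_def by auto

lemma forms_cscale: assumes "p \<in> forms d" shows "cscale c p \<in> forms d"
  using assms keys_cscale[of c p] unfolding forms_def by auto

lemma forms_zero: "0 \<in> forms d"
  unfolding forms_def by simp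

lemma forms_subspace: "V.subspace (forms d)"
  unfolding V.subspace_def using forms_add forms_cscale forms_zero by metis

lemma forms_mult: assumes "p \<in> forms d" "q \<in> forms e" shows "p * q \<in> forms (d + e)"
proof -
  have "mdeg m = d + e" if mk: "m \<in> Poly_Mapping.keys (p * q)" for m
  proof -
    obtain a b where "m = a + b" "a \<in> Poly_Mapping.keys p" "b \<in> Poly_Mapping.keys q"
      using keys_mult[of p q] mk by blast
    then show ?thesis using assms by (simp add: forms_def mdeg_add)
  qed
  then show ?thesis by (simp add: forms_def)
qed

definition monom :: "mon \<Rightarrow> pol" where "monom m = Poly_Mapping.single m 1"

lemma monom_forms: "mdeg m = d \<Longrightarrow> monom m \<in> forms d"
  by (simp add: forms_def monom_def)

lemma cscale_mono: "cscale c (monom m) = Poly_Mapping.single m c"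
  by (simp add: cscale_def monom_def)

lemma sum_monos: "p = (\<Sum>m\<in>Poly_Mapping.keys p. cscale (Poly_Mapping.lookup p m) (monom m))"
proof (rule poly_mapping_eqI)
  fix k
  show "Poly_Mapping.lookup p k = Poly_Mapping.lookup (\<Sum>m\<in>Poly_Mapping.keys p. cscale (Poly_Mapping.lookup p m) (monom m)) k"
    by (simp add: lookup_sum cscale_mono lookup_single when_def in_keys_iff sum.If_cases)
qed

definition tup :: "mon \<Rightarrow> nat \<times> nat \<times> nat \<times> nat" where
  "tup m = (Poly_Mapping.lookup m 0, Poly_Mapping.lookup m 1, Poly_Mapping.lookup m 2, Poly_Mapping.lookup m 3)"

lemma inj_tup: "inj tup"
proof (rule injI)
  fix m m' assume "tup m = tup m'"
  then have "Poly_Mapping.lookup m k = Poly_Mapping.lookup m' k" for k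
    using exhaust4[of k] by (auto simp: tup_def)
  then show "m = m'" by (rule poly_mapping_eqI)
qed

lemma tup_image: "tup ` {m. mdeg m = d} = {(a,b,c,e). a+b+c+e = d}"
proof
  show "tup ` {m. mdeg m = d} \<subseteq> {(a,b,c,e). a+b+c+e = d}"
    by (auto simp: tup_def mdeg4)
next
  show "{(a,b,c,e). a+b+c+e = d} \<subseteq> tup ` {m. mdeg m = d}"
  proof
    fix x assume "x \<in> {(a,b,c,e). a+b+c+e = d}"
    then obtain a b c e where x: "x = (a,b,c,e)" and "a+b+c+e = d" by auto
    let ?m = "Poly_Mapping.single (0::4) a + Poly_Mapping.single 1 b + Poly_Mapping.single 2 c + Poly_Mapping.single 3 e"
    have "tup ?m = (a,b,c,e)" by (simp add: tup_def lookup_add lookup_single)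
    moreover have "mdeg ?m = d" using \<open>a+b+c+e = d\<close> by (simp add: mdeg4 lookup_add lookup_single)
    ultimately show "x \<in> tup ` {m. mdeg m = d}" unfolding x by force
  qed
qed

lemma card_monos: "card {m. mdeg m = d} = card {(a,b,c,e). a+b+c+e = d}"
  by (metis tup_image card_image inj_tup inj_on_subset subset_UNIV)

lemma finite_tuples: "finite {(a,b,c,e). a+b+c+(e::nat) = d}"
proof (rule finite_subset)
  show "{(a,b,c,e). a+b+c+(e::nat) = d} \<subseteq> {..d} \<times> {..d} \<times> {..d} \<times> {..d}" by auto
qed auto

lemma finite_monos: "finite {m. mdeg m = d}"
  by (metis tup_image finite_tuples finite_imageD inj_tup inj_on_subset subset_UNIV)

lemma card2: "card {(c,e). c+(e::nat) = n} = n+1"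
proof -
  have "{(c,e). c+(e::nat) = n} = (\<lambda>c. (c, n-c)) ` {..n}" by auto
  moreover have "inj_on (\<lambda>c. (c, n-c)) {..n}" by (auto intro: inj_onI)
  ultimately show ?thesis by (simp add: card_image)
qed

lemma card3: "card {(b,c,e). b+c+(e::nat) = n} = (\<Sum>b\<le>n. n - b + 1)"
proof -
  have "{(b,c,e). b+c+(e::nat) = n} = Sigma {..n} (\<lambda>b. {(c,e). c+e = n-b})" by auto
  moreover have "finite {(c,e). c+(e::nat) = m}" for m
    by (rule finite_subset[of _ "{..m} \<times> {..m}"]) auto
  ultimately show ?thesis by (simp add: card_SigmaI card2)
qed

lemma card4: "card {(a,b,c,e). a+b+c+(e::nat) = n} = (\<Sum>a\<le>n. \<Sum>b\<le>n-a. n - a - b + 1)"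
proof -
  have eq: "{(a,b,c,e). a+b+c+(e::nat) = n} = Sigma {..n} (\<lambda>a. {(b,c,e). b+c+e = n-a})" by auto
  have fin: "finite {(b,c,e). b+c+(e::nat) = m}" for m
    by (rule finite_subset[of _ "{..m} \<times> {..m} \<times> {..m}"]) auto
  have "card {(a,b,c,e). a+b+c+(e::nat) = n} = card (Sigma {..n} (\<lambda>a. {(b,c,e). b+c+e = n-a}))"
    by (simp only: eq)
  also have "\<dots> = (\<Sum>a\<le>n. card {(b,c,e). b+c+(e::nat) = n-a})"
    by (rule card_SigmaI) (auto simp: fin)
  also have "\<dots> = (\<Sum>a\<le>n. \<Sum>b\<le>n-a. n - a - b + 1)"
    by (rule sum.cong) (simp_all add: card3)
  finally show ?thesis .
qed

lemma atMost3: "{..3::nat} = {0,1,2,3}" "{..2::nat} = {0,1,2}" "{..1::nat} = {0,1}" "{..0::nat} = {0}"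
  by auto

lemma card_monos2: "card {m. mdeg m = 2} = 10"
  unfolding card_monos card4 by (simp add: atMost3)

lemma card_monos3: "card {m. mdeg m = 3} = 20"
  unfolding card_monos card4 by (simp add: atMost3)


lemma inj_mono: "inj monom"
  by (rule injI) (metis monom_def lookup_single_eq lookup_single_not_eq zero_neq_one)

lemma forms_span: "forms d \<subseteq> V.span (monom ` {m. mdeg m = d})"
proof
  fix p assume p: "p \<in> forms d"
  have "(\<Sum>m\<in>Poly_Mapping.keys p. cscale (Poly_Mapping.lookup p m) (monom m)) \<in> V.span (monom ` {m. mdeg m = d})"
  proof (rule V.span_sum)
    fix m assume "m \<in> Poly_Mapping.keys p"
    then have "mdeg m = d" using p by (simp add: forms_def)
    then show "cscale (Poly_Mapping.lookup p m) (monom m) \<in> V.span (monom ` {m. mdeg m = d})"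
      by (intro V.span_scale V.span_base) auto
  qed
  then show "p \<in> V.span (monom ` {m. mdeg m = d})" using sum_monos[of p] by simp
qed

lemma monos_indep: assumes "finite M" shows "V.independent (monom ` M)"
proof (rule V.independent_if_scalars_zero)
  show "finite (monom ` M)" using assms by simp
  fix f x assume s: "(\<Sum>x\<in>monom ` M. cscale (f x) x) = 0" and x: "x \<in> monom ` M"
  then obtain m0 where m0: "m0 \<in> M" "x = monom m0" by auto
  have "(\<Sum>x\<in>monom ` M. cscale (f x) x) = (\<Sum>m\<in>M. cscale (f (monom m)) (monom m))"
    by (rule sum.reindex_cong[where l=monom]) (auto intro: inj_on_subset[OF inj_mono])
  then have "0 = Poly_Mapping.lookup (\<Sum>m\<in>M. cscale (f (monom m)) (monom m)) m0"
    using s by simp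
  also have "\<dots> = (\<Sum>m\<in>M. if m = m0 then f (monom m) else 0)"
    by (simp add: lookup_sum cscale_mono lookup_single when_def)
  also have "\<dots> = f (monom m0)" using m0 assms by (simp add: sum.delta')
  finally show "f x = 0" using m0 by simp
qed

lemma cdim_forms: "cdim (forms d) = card {m. mdeg m = d}"
proof -
  have "card (monom ` {m. mdeg m = d}) = V.dim (forms d)"
    using forms_span monos_indep[OF finite_monos] by (intro V.basis_card_eq_dim) (auto intro: monom_forms)
  then show ?thesis by (simp add: cdim_def card_image inj_on_subset[OF inj_mono])
qed

lemma forms_fin: "\<exists>X. finite X \<and> forms d \<subseteq> V.span X"
  using forms_span finite_monos by blast

lemma fd_indep_bound:
  assumes "B \<subseteq> W" "V.independent B" "W \<subseteq> V.span X" "finite X"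
  shows "finite B \<and> card B \<le> V.dim W"
proof -
  obtain B' where B': "B \<subseteq> B'" "B' \<subseteq> W" "V.independent B'" "W \<subseteq> V.span B'"
    using V.maximal_independent_subset_extend[OF assms(1,2)] by blast
  have fB': "finite B'" using V.independent_span_bound[OF assms(4) B'(3)] B'(2) assms(3) by blast
  have "card B' = V.dim W" by (rule V.basis_card_eq_dim) (use B' in auto)
  then show ?thesis using B'(1) fB' by (metis card_mono finite_subset)
qed

lemma fd_dim_mono:
  assumes "S \<subseteq> W" "W \<subseteq> V.span X" "finite X"
  shows "V.dim S \<le> V.dim W"
proof -
  obtain B where B: "B \<subseteq> S" "V.independent B" "S \<subseteq> V.span B" "card B = V.dim S"
    using V.basis_exists by blast
  show ?thesis using fd_indep_bound[of B W X] B assms by auto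
qed

lemma fd_subspace_eq:
  assumes "S \<subseteq> T" "V.subspace S" "T \<subseteq> V.span X" "finite X" "V.dim T \<le> V.dim S"
  shows "S = T"
proof -
  obtain B where B: "B \<subseteq> S" "V.independent B" "S \<subseteq> V.span B" "card B = V.dim S"
    using V.basis_exists by blast
  obtain B' where B': "B \<subseteq> B'" "B' \<subseteq> T" "V.independent B'" "T \<subseteq> V.span B'"
    using V.maximal_independent_subset_extend[of B T] B assms(1) by blast
  have fB': "finite B'" using V.independent_span_bound[OF assms(4) B'(3)] B'(2) assms(3) by blast
  have "card B' = V.dim T" by (rule V.basis_card_eq_dim) (use B' in auto)
  then have "B' = B" using B'(1) fB' B(4) assms(5) by (metis card_seteq)
  then have "T \<subseteq> V.span B" using B' by simp
  also have "\<dots> \<subseteq> S" using B(1) assms(2) by (rule V.span_minimal)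
  finally show ?thesis using assms(1) by blast
qed


definition indep_mod :: "pol set \<Rightarrow> pol set \<Rightarrow> bool" where
  "indep_mod I S \<longleftrightarrow> (\<forall>c. (\<Sum>x\<in>S. cscale (c x) x) \<in> I \<longrightarrow> (\<forall>x\<in>S. c x = 0))"

lemma hom_subspace: "homogeneous_ideal I \<Longrightarrow> V.subspace I"
  unfolding homogeneous_ideal_def V.subspace_def cscale_mult by blast

lemma hom_mult: "homogeneous_ideal I \<Longrightarrow> p \<in> I \<Longrightarrow> r * p \<in> I"
  unfolding homogeneous_ideal_def by blast

lemma sum_delta_scale: assumes "finite S" "x \<in> S"
  shows "(\<Sum>y\<in>S. cscale (if y = x then 1 else 0) y) = x"
proof -
  have "(\<Sum>y\<in>S. cscale (if y = x then 1 else 0) y) = (\<Sum>y\<in>S. if y = x then x else 0)"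
    by (rule sum.cong) auto
  also have "\<dots> = x" using assms by (simp add: sum.delta)
  finally show ?thesis .
qed

lemma sum_two_scale: assumes "finite S" "x \<in> S" "y \<in> S" "x \<noteq> y"
  shows "(\<Sum>z\<in>S. cscale (if z = x then 1 else if z = y then -1 else 0) z) = x - y"
proof -
  have "(\<Sum>z\<in>S. cscale (if z = x then 1 else if z = y then -1 else 0) z)
      = (\<Sum>z\<in>S. (if z = x then x else 0) + (if z = y then - y else 0))"
    by (rule sum.cong) (use assms in \<open>auto simp: V.scale_minus_left\<close>)
  also have "\<dots> = x - y" using assms by (simp add: sum.distrib sum.delta)
  finally show ?thesis .
qed

lemma indep_mod_notin: assumes "indep_mod I S" "finite S" "x \<in> S" shows "x \<notin> I"
proof
  assume "x \<in> I"
  then have "(\<Sum>y\<in>S. cscale ((\<lambda>y. if y = x then 1 else 0) y) y) \<in> I"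
    using sum_delta_scale[OF assms(2,3)] by simp
  moreover have H: "(\<Sum>y\<in>S. cscale (c y) y) \<in> I \<Longrightarrow> c x = 0" for c
    using assms(1,3) unfolding indep_mod_def by blast
  ultimately show False using H[of "\<lambda>y. if y = x then 1 else 0"] by simp
qed

lemma indep_mod_diff: assumes "indep_mod I S" "finite S" "x \<in> S" "y \<in> S" "x \<noteq> y" shows "x - y \<notin> I"
proof
  assume "x - y \<in> I"
  then have "(\<Sum>z\<in>S. cscale ((\<lambda>z. if z = x then 1 else if z = y then -1 else 0) z) z) \<in> I"
    using sum_two_scale[OF assms(2-5)] by simp
  moreover have H: "(\<Sum>y\<in>S. cscale (c y) y) \<in> I \<Longrightarrow> c x = 0" for c
    using assms(1,3) unfolding indep_mod_def by blast
  ultimately show False using H[of "\<lambda>z. if z = x then 1 else if z = y then -1 else 0"] by simp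
qed

lemma quot_bound:
  assumes I: "V.subspace I" and S: "S \<subseteq> forms e" "finite S" "indep_mod I S"
  shows "card S + cdim (I \<inter> forms e) \<le> cdim (forms e)"
proof -
  obtain B where B: "B \<subseteq> I \<inter> forms e" "V.independent B" "I \<inter> forms e \<subseteq> V.span B" "card B = V.dim (I \<inter> forms e)"
    using V.basis_exists by blast
  obtain X where X: "finite X" "forms e \<subseteq> V.span X" using forms_fin by blast
  have fB: "finite B" using fd_indep_bound[of B "forms e" X] B X by auto
  have disj: "S \<inter> B = {}" using indep_mod_notin[OF S(3) S(2)] B(1) by blast
  have ind: "V.independent (S \<union> B)"
  proof (rule V.independent_if_scalars_zero)
    show "finite (S \<union> B)" using fB S by simp
    fix f x assume z: "(\<Sum>x\<in>S \<union> B. cscale (f x) x) = 0" and x: "x \<in> S \<union> B"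
    have "(\<Sum>x\<in>S. cscale (f x) x) + (\<Sum>x\<in>B. cscale (f x) x) = 0"
      using z disj fB S(2) by (simp add: sum.union_disjoint)
    then have eq: "(\<Sum>x\<in>S. cscale (f x) x) = - (\<Sum>x\<in>B. cscale (f x) x)"
      by (simp add: eq_neg_iff_add_eq_0)
    have "(\<Sum>x\<in>B. cscale (f x) x) \<in> I"
      using B(1) by (intro V.subspace_sum[OF I] V.subspace_scale[OF I]) auto
    then have "(\<Sum>x\<in>S. cscale (f x) x) \<in> I" using eq V.subspace_neg[OF I] by simp
    then have fS: "\<forall>x\<in>S. f x = 0" using S(3) unfolding indep_mod_def by blast
    then have "(\<Sum>x\<in>S. cscale (f x) x) = 0" by simp
    then have "(\<Sum>x\<in>B. cscale (f x) x) = 0" using eq by simp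
    then have "\<forall>x\<in>B. f x = 0" using V.independentD[OF B(2) fB] by blast
    then show "f x = 0" using fS x by blast
  qed
  have "card (S \<union> B) \<le> V.dim (forms e)"
    using fd_indep_bound[of "S \<union> B" "forms e" X] ind B(1) S(1) X by auto
  then show ?thesis using disj fB S(2) B(4) by (simp add: card_Un_disjoint cdim_def)
qed

lemma quot_exists:
  assumes I: "V.subspace I"
  shows "\<exists>C. C \<subseteq> forms e \<and> finite C \<and> indep_mod I C \<and> card C + cdim (I \<inter> forms e) = cdim (forms e)"
proof -
  obtain B where B: "B \<subseteq> I \<inter> forms e" "V.independent B" "I \<inter> forms e \<subseteq> V.span B" "card B = V.dim (I \<inter> forms e)"
    using V.basis_exists by blast
  obtain X where X: "finite X" "forms e \<subseteq> V.span X" using forms_fin by blast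
  obtain B' where B': "B \<subseteq> B'" "B' \<subseteq> forms e" "V.independent B'" "forms e \<subseteq> V.span B'"
    using V.maximal_independent_subset_extend[of B "forms e"] B by blast
  have fB': "finite B'" using fd_indep_bound[of B' "forms e" X] B' X by auto
  have cB': "card B' = V.dim (forms e)" by (rule V.basis_card_eq_dim) (use B' in auto)
  have fB: "finite B" using B'(1) fB' finite_subset by blast
  define C where "C = B' - B"
  have "indep_mod I C"
    unfolding indep_mod_def
  proof (intro allI impI)
    fix c assume cI: "(\<Sum>x\<in>C. cscale (c x) x) \<in> I"
    have "(\<Sum>x\<in>C. cscale (c x) x) \<in> forms e"
      using B'(2) unfolding C_def by (intro V.subspace_sum[OF forms_subspace] V.subspace_scale[OF forms_subspace]) auto
    then have "(\<Sum>x\<in>C. cscale (c x) x) \<in> V.span B" using cI B(3) by blast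
    then obtain u where u: "(\<Sum>x\<in>C. cscale (c x) x) = (\<Sum>v\<in>B. cscale (u v) v)"
      using V.span_finite[OF fB] by auto
    define g where "g x = (if x \<in> C then c x else - u x)" for x
    have BC: "B' = C \<union> B" "C \<inter> B = {}" using B'(1) unfolding C_def by auto
    have "(\<Sum>x\<in>B'. cscale (g x) x) = (\<Sum>x\<in>C. cscale (g x) x) + (\<Sum>x\<in>B. cscale (g x) x)"
      using BC fB fB' by (simp add: sum.union_disjoint)
    also have "(\<Sum>x\<in>C. cscale (g x) x) = (\<Sum>x\<in>C. cscale (c x) x)"
      by (rule sum.cong) (auto simp: g_def)
    also have "(\<Sum>x\<in>B. cscale (g x) x) = (\<Sum>x\<in>B. - cscale (u x) x)"
      by (rule sum.cong) (use BC in \<open>auto simp: g_def V.scale_minus_left\<close>)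
    also have "\<dots> = - (\<Sum>x\<in>B. cscale (u x) x)" by (simp add: sum_negf)
    finally have "(\<Sum>x\<in>B'. cscale (g x) x) = 0" using u by simp
    then have "\<forall>x\<in>B'. g x = 0" using V.independentD[OF B'(3) fB'] by blast
    then show "\<forall>x\<in>C. c x = 0" unfolding g_def C_def by auto
  qed
  moreover have "card C + cdim (I \<inter> forms e) = cdim (forms e)"
  proof -
    have "card C = card B' - card B" unfolding C_def using fB B'(1) by (rule card_Diff_subset)
    moreover have "card B \<le> card B'" using fB' B'(1) by (rule card_mono)
    ultimately show ?thesis using cB' B(4) unfolding cdim_def by simp
  qed
  moreover have "C \<subseteq> forms e" "finite C" using B'(2) fB' unfolding C_def by auto
  ultimately show ?thesis by blast
qed


lemma indep_modD: "indep_mod I S \<Longrightarrow> (\<Sum>x\<in>S. cscale (c x) x) \<in> I \<Longrightarrow> x \<in> S \<Longrightarrow> c x = 0"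
  unfolding indep_mod_def by blast

lemma cscale_mult_comm: "cscale a (l * x) = l * cscale a x"
  by (simp add: cscale_mult mult.left_commute)

lemma mono_step:
  assumes H: "homogeneous_ideal I" and l: "l \<in> forms 1"
    and nzd: "\<forall>g\<in>forms d. l * g \<in> I \<longrightarrow> g \<in> I"
  shows "cdim (forms d) - cdim (I \<inter> forms d) \<le> cdim (forms (Suc d)) - cdim (I \<inter> forms (Suc d))"
proof -
  have I: "V.subspace I" using H by (rule hom_subspace)
  obtain C where C: "C \<subseteq> forms d" "finite C" "indep_mod I C" "card C + cdim (I \<inter> forms d) = cdim (forms d)"
    using quot_exists[OF I] by blast
  define D where "D = (\<lambda>x. l * x) ` C"
  have inj: "inj_on (\<lambda>x. l * x) C"
  proof (rule inj_onI)
    fix x y assume xy: "x \<in> C" "y \<in> C" "l * x = l * y"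
    show "x = y"
    proof (rule ccontr)
      assume ne: "x \<noteq> y"
      have z: "l * (x - y) = 0" using xy(3) by (simp add: algebra_simps)
      have "l * (x - y) \<in> I" unfolding z by (rule V.subspace_0[OF I])
      moreover have "x - y \<in> forms d" using C(1) xy V.subspace_diff[OF forms_subspace] by blast
      ultimately have "x - y \<in> I" using nzd by blast
      then show False using indep_mod_diff[OF C(3) C(2) xy(1,2) ne] by simp
    qed
  qed
  have Dforms: "D \<subseteq> forms (Suc d)" using C(1) forms_mult[OF l] by (auto simp: D_def)
  have "indep_mod I D"
    unfolding indep_mod_def
  proof (intro allI impI)
    fix c assume cI: "(\<Sum>w\<in>D. cscale (c w) w) \<in> I"
    have "(\<Sum>w\<in>D. cscale (c w) w) = (\<Sum>x\<in>C. cscale (c (l * x)) (l * x))"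
      unfolding D_def by (simp add: sum.reindex[OF inj])
    also have "\<dots> = l * (\<Sum>x\<in>C. cscale (c (l * x)) x)"
      by (simp add: cscale_mult_comm sum_distrib_left)
    finally have "l * (\<Sum>x\<in>C. cscale (c (l * x)) x) \<in> I" using cI by simp
    moreover have "(\<Sum>x\<in>C. cscale (c (l * x)) x) \<in> forms d"
      using C(1) by (intro V.subspace_sum[OF forms_subspace] V.subspace_scale[OF forms_subspace]) auto
    ultimately have S: "(\<Sum>x\<in>C. cscale (c (l * x)) x) \<in> I" using nzd by blast
    show "\<forall>w\<in>D. c w = 0"
    proof
      fix w assume "w \<in> D"
      then obtain x where x: "x \<in> C" "w = l * x" by (auto simp: D_def)
      have "(\<lambda>x. c (l * x)) x = 0" by (rule indep_modD[OF C(3) _ x(1)]) (use S in simp)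
      then show "c w = 0" using x by simp
    qed
  qed
  then have "card D + cdim (I \<inter> forms (Suc d)) \<le> cdim (forms (Suc d))"
    using quot_bound[OF I Dforms] C(2) by (simp add: D_def)
  moreover have "card D = card C" using inj by (simp add: D_def card_image)
  ultimately show ?thesis using C(4) by linarith
qed

definition Y :: "4 \<Rightarrow> pol" where "Y i = monom (Poly_Mapping.single i 1)"

lemma mdeg_single: "mdeg (Poly_Mapping.single i k) = k"
proof -
  have "mdeg (Poly_Mapping.single i k) = (\<Sum>j\<in>UNIV. if i = j then k else 0)"
    unfolding mdeg_def by (rule sum.cong) (simp_all add: lookup_single when_def)
  also have "\<dots> = k" by (simp add: sum.delta)
  finally show ?thesis .
qed

lemma Y_forms: "Y i \<in> forms 1"
  unfolding Y_def by (rule monom_forms) (simp add: mdeg_single)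

lemma mdeg1: assumes "mdeg m = 1" shows "\<exists>i. m = Poly_Mapping.single i 1"
proof -
  have "sum (Poly_Mapping.lookup m) UNIV = Suc 0" using assms by (simp add: mdeg_def)
  then obtain a where a: "Poly_Mapping.lookup m a = Suc 0" "\<forall>b. a \<noteq> b \<longrightarrow> Poly_Mapping.lookup m b = 0"
    using sum_eq_Suc0_iff[of UNIV "Poly_Mapping.lookup m"] by auto
  have "m = Poly_Mapping.single a 1"
  proof (rule poly_mapping_eqI)
    fix k show "Poly_Mapping.lookup m k = Poly_Mapping.lookup (Poly_Mapping.single a 1) k"
      using a by (cases "a = k") (simp_all add: lookup_single_not_eq)
  qed
  then show ?thesis by blast
qed

lemma sat1: assumes "saturated I" "\<And>i. Y i * g \<in> I" shows "g \<in> I"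
proof -
  have "\<forall>m. mdeg m = 1 \<longrightarrow> Poly_Mapping.single m 1 * g \<in> I"
  proof (intro allI impI)
    fix m assume "mdeg m = (1::nat)"
    then obtain i where "m = Poly_Mapping.single i 1" using mdeg1 by blast
    then show "Poly_Mapping.single m 1 * g \<in> I" using assms(2)[of i] by (simp add: Y_def monom_def)
  qed
  then show ?thesis using assms(1) unfolding saturated_def by blast
qed

lemma satk: assumes "saturated I" "g \<notin> I" shows "\<exists>m. mdeg m = k \<and> monom m * g \<notin> I"
  using assms unfolding saturated_def monom_def by blast


locale SI =
  fixes I :: "pol set"
  assumes hom: "homogeneous_ideal I" and sat: "saturated I"
begin

lemma Isub: "V.subspace I" using hom by (rule hom_subspace)

lemma Imult: "p \<in> I \<Longrightarrow> r * p \<in> I" using hom by (rule hom_mult)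

definition Lb :: "pol \<Rightarrow> pol set" where "Lb b = {x \<in> forms 1. x * b \<in> I}"

definition FF :: "pol \<Rightarrow> bool" where "FF b \<longleftrightarrow> (\<exists>e. b \<in> forms e) \<and> b \<notin> I"

definition ismax :: "pol \<Rightarrow> bool" where
  "ismax b \<longleftrightarrow> FF b \<and> (\<forall>b'. FF b' \<longrightarrow> Lb b \<subseteq> Lb b' \<longrightarrow> Lb b' = Lb b)"

lemma Lb_forms: "Lb b \<subseteq> forms 1" by (auto simp: Lb_def)

lemma Lb_sub: "V.subspace (Lb b)"
  unfolding V.subspace_def Lb_def
proof (intro conjI ballI allI)
  show "0 \<in> {x \<in> forms 1. x * b \<in> I}" using forms_zero V.subspace_0[OF Isub] by simp
  fix x y assume x: "x \<in> {x \<in> forms 1. x * b \<in> I}" and y: "y \<in> {x \<in> forms 1. x * b \<in> I}"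
  then show "x + y \<in> {x \<in> forms 1. x * b \<in> I}"
    using forms_add V.subspace_add[OF Isub] by (auto simp: distrib_right)
next
  fix c x assume x: "x \<in> {x \<in> forms 1. x * b \<in> I}"
  have "cscale c x * b = cscale c (x * b)" by (simp add: cscale_mult mult.assoc)
  then show "cscale c x \<in> {x \<in> forms 1. x * b \<in> I}"
    using x forms_cscale V.subspace_scale[OF Isub] by auto
qed

lemma Lb_mult: "Lb b \<subseteq> Lb (r * b)"
proof
  fix x assume "x \<in> Lb b"
  then have "x \<in> forms 1" "r * (x * b) \<in> I" using Imult by (auto simp: Lb_def)
  then show "x \<in> Lb (r * b)" by (simp add: Lb_def mult.left_commute)
qed

lemma ismax_FF: "ismax b \<Longrightarrow> FF b" by (simp add: ismax_def)

lemma exmax: assumes "FF a" shows "\<exists>b. ismax b \<and> Lb a \<subseteq> Lb b"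
proof -
  obtain X where X: "finite X" "forms 1 \<subseteq> V.span X" using forms_fin by blast
  define K where "K = {b. FF b \<and> Lb a \<subseteq> Lb b}"
  define N where "N = (\<lambda>b. cdim (Lb b)) ` K"
  have "N \<subseteq> {..cdim (forms 1)}"
    unfolding N_def cdim_def using fd_dim_mono[OF Lb_forms X(2,1)] by auto
  then have fN: "finite N" using finite_subset by blast
  have "a \<in> K" using assms by (simp add: K_def)
  then have "N \<noteq> {}" by (auto simp: N_def)
  then have "Max N \<in> N" using fN by (rule Max_in[rotated])
  then obtain b where b: "b \<in> K" "cdim (Lb b) = Max N" by (auto simp: N_def)
  have "ismax b"
    unfolding ismax_def
  proof (intro conjI allI impI)
    show "FF b" using b by (simp add: K_def)
    fix b' assume b': "FF b'" "Lb b \<subseteq> Lb b'"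
    then have "b' \<in> K" using b(1) by (auto simp: K_def)
    then have "cdim (Lb b') \<le> cdim (Lb b)" using b(2) fN by (simp add: N_def)
    then show "Lb b' = Lb b"
      using fd_subspace_eq[of "Lb b" "Lb b'" X] b'(2) Lb_sub Lb_forms X unfolding cdim_def by (metis subset_trans)
  qed
  then show ?thesis using b(1) by (auto simp: K_def)
qed

lemma ismax_mult:
  assumes "ismax b" "r \<in> forms k" "r * b \<notin> I"
  shows "ismax (r * b) \<and> Lb (r * b) = Lb b"
proof -
  obtain e where "b \<in> forms e" using ismax_FF[OF assms(1)] by (auto simp: FF_def)
  then have "r * b \<in> forms (k + e)" using assms(2) by (intro forms_mult)
  then have FFr: "FF (r * b)" using assms(3) by (auto simp: FF_def)
  have eq: "Lb (r * b) = Lb b" using assms(1) FFr Lb_mult by (simp add: ismax_def)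
  have "ismax (r * b)"
    unfolding ismax_def
  proof (intro conjI allI impI FFr)
    fix b' assume "FF b'" "Lb (r * b) \<subseteq> Lb b'"
    then show "Lb b' = Lb (r * b)" using assms(1) eq by (simp add: ismax_def)
  qed
  then show ?thesis using eq by simp
qed

lemma moveup:
  assumes "ismax b" "b \<in> forms e" "e \<le> D"
  shows "\<exists>b'. ismax b' \<and> b' \<in> forms D \<and> Lb b' = Lb b"
proof -
  have "b \<notin> I" using ismax_FF[OF assms(1)] by (simp add: FF_def)
  then obtain m where m: "mdeg m = D - e" "monom m * b \<notin> I" using satk[OF sat] by blast
  have "monom m \<in> forms (D - e)" using m(1) by (rule monom_forms)
  then have "ismax (monom m * b) \<and> Lb (monom m * b) = Lb b" and "monom m * b \<in> forms (D - e + e)"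
    using ismax_mult[OF assms(1) _ m(2)] forms_mult assms(2) by auto
  then show ?thesis using assms(3) by (metis le_add_diff_inverse2)
qed

end


context SI begin

lemma indep_claim:
  "finite A \<Longrightarrow> (\<forall>i\<in>A. ismax (\<phi> i)) \<Longrightarrow> inj_on (\<lambda>i. Lb (\<phi> i)) A \<Longrightarrow>
   (\<forall>i\<in>A. Lb (\<phi> i) \<noteq> Lb b) \<Longrightarrow> ismax b \<Longrightarrow> b - (\<Sum>i\<in>A. cscale (c i) (\<phi> i)) \<notin> I"
proof (induction "card A" arbitrary: A \<phi> b c rule: less_induct)
  case less
  show ?case
  proof (cases "A = {}")
    case True
    then show ?thesis using ismax_FF[OF less.prems(5)] by (simp add: FF_def)
  next
    case False
    then obtain j where j: "j \<in> A" by blast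
    have "\<not> Lb (\<phi> j) \<subseteq> Lb b"
    proof
      assume "Lb (\<phi> j) \<subseteq> Lb b"
      then have "Lb b = Lb (\<phi> j)" using less.prems(2) j ismax_FF[OF less.prems(5)] by (simp add: ismax_def)
      then show False using less.prems(4) j by blast
    qed
    then obtain x where x: "x \<in> forms 1" "x * \<phi> j \<in> I" "x * b \<notin> I" by (auto simp: Lb_def)
    define A' where "A' = {i \<in> A. x * \<phi> i \<notin> I}"
    have A'A: "A' \<subseteq> A" "j \<notin> A'" using x(2) by (auto simp: A'_def)
    have fA': "finite A'" using A'A(1) less.prems(1) finite_subset by blast
    have "A' \<subseteq> A - {j}" using A'A by blast
    then have "card A' \<le> card (A - {j})" using less.prems(1) by (intro card_mono) auto
    also have "\<dots> < card A" using less.prems(1) j by (rule card_Diff1_less)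
    finally have cA': "card A' < card A" .
    have mx: "ismax (x * \<phi> i) \<and> Lb (x * \<phi> i) = Lb (\<phi> i)" if "i \<in> A'" for i
      using that ismax_mult[OF _ x(1)] less.prems(2) A'A(1) by (auto simp: A'_def)
    have mb: "ismax (x * b) \<and> Lb (x * b) = Lb b" using ismax_mult[OF less.prems(5) x(1,3)] .
    have IH: "x * b - (\<Sum>i\<in>A'. cscale (c i) (x * \<phi> i)) \<notin> I"
    proof (rule less.hyps[OF cA' fA'])
      show "\<forall>i\<in>A'. ismax (x * \<phi> i)" using mx by blast
      show "inj_on (\<lambda>i. Lb (x * \<phi> i)) A'"
        using inj_on_subset[OF less.prems(3) A'A(1)] mx by (simp add: inj_on_def)
      show "\<forall>i\<in>A'. Lb (x * \<phi> i) \<noteq> Lb (x * b)" using mx mb less.prems(4) A'A(1) by auto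
      show "ismax (x * b)" using mb by blast
    qed
    show ?thesis
    proof
      assume H: "b - (\<Sum>i\<in>A. cscale (c i) (\<phi> i)) \<in> I"
      have "x * (b - (\<Sum>i\<in>A. cscale (c i) (\<phi> i))) = x * b - (\<Sum>i\<in>A. cscale (c i) (x * \<phi> i))"
        by (simp add: right_diff_distrib sum_distrib_left cscale_mult_comm)
      also have "(\<Sum>i\<in>A. cscale (c i) (x * \<phi> i)) = (\<Sum>i\<in>A'. cscale (c i) (x * \<phi> i)) + (\<Sum>i\<in>A - A'. cscale (c i) (x * \<phi> i))"
        using sum.subset_diff[OF A'A(1) less.prems(1)] by (simp add: add.commute)
      finally have eq: "x * (b - (\<Sum>i\<in>A. cscale (c i) (\<phi> i))) + (\<Sum>i\<in>A - A'. cscale (c i) (x * \<phi> i))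
          = x * b - (\<Sum>i\<in>A'. cscale (c i) (x * \<phi> i))" by simp
      have "(\<Sum>i\<in>A - A'. cscale (c i) (x * \<phi> i)) \<in> I"
        by (intro V.subspace_sum[OF Isub] V.subspace_scale[OF Isub]) (auto simp: A'_def)
      moreover have "x * (b - (\<Sum>i\<in>A. cscale (c i) (\<phi> i))) \<in> I" using H by (rule Imult)
      ultimately have "x * (b - (\<Sum>i\<in>A. cscale (c i) (\<phi> i))) + (\<Sum>i\<in>A - A'. cscale (c i) (x * \<phi> i)) \<in> I"
        using V.subspace_add[OF Isub] by blast
      then have "x * b - (\<Sum>i\<in>A'. cscale (c i) (x * \<phi> i)) \<in> I" by (simp only: eq)
      then show False using IH by contradiction
    qed
  qed
qed

lemma indep_set:
  assumes "finite A" "\<forall>i\<in>A. ismax (\<phi> i)" "inj_on (\<lambda>i. Lb (\<phi> i)) A"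
  shows "indep_mod I (\<phi> ` A) \<and> card (\<phi> ` A) = card A"
proof -
  have inj: "inj_on \<phi> A" using assms(3) by (auto simp: inj_on_def)
  have "indep_mod I (\<phi> ` A)"
    unfolding indep_mod_def
  proof (intro allI impI ballI)
    fix c s assume cI: "(\<Sum>x\<in>\<phi> ` A. cscale (c x) x) \<in> I" and s: "s \<in> \<phi> ` A"
    then obtain j where j: "j \<in> A" "s = \<phi> j" by blast
    show "c s = 0"
    proof (rule ccontr)
      assume k: "c s \<noteq> 0"
      define \<kappa> where "\<kappa> = c s"
      have "(\<Sum>x\<in>\<phi> ` A. cscale (c x) x) = (\<Sum>i\<in>A. cscale (c (\<phi> i)) (\<phi> i))"
        by (simp add: sum.reindex[OF inj])
      also have "\<dots> = cscale \<kappa> (\<phi> j) + (\<Sum>i\<in>A - {j}. cscale (c (\<phi> i)) (\<phi> i))"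
        using assms(1) j by (simp add: sum.remove \<kappa>_def)
      finally have eqS: "(\<Sum>x\<in>\<phi> ` A. cscale (c x) x) = cscale \<kappa> (\<phi> j) + (\<Sum>i\<in>A - {j}. cscale (c (\<phi> i)) (\<phi> i))" .
      have "cscale (1 / \<kappa>) (cscale \<kappa> (\<phi> j) + (\<Sum>i\<in>A - {j}. cscale (c (\<phi> i)) (\<phi> i))) \<in> I"
        using V.subspace_scale[OF Isub cI] unfolding eqS .
      also have "cscale (1 / \<kappa>) (cscale \<kappa> (\<phi> j) + (\<Sum>i\<in>A - {j}. cscale (c (\<phi> i)) (\<phi> i)))
         = \<phi> j - (\<Sum>i\<in>A - {j}. cscale (- (c (\<phi> i) / \<kappa>)) (\<phi> i))"
        using k by (simp add: \<kappa>_def V.scale_right_distrib V.scale_sum_right V.scale_minus_left sum_negf)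
      finally have "\<phi> j - (\<Sum>i\<in>A - {j}. cscale ((\<lambda>i. - (c (\<phi> i) / \<kappa>)) i) (\<phi> i)) \<in> I" by simp
      moreover have "\<phi> j - (\<Sum>i\<in>A - {j}. cscale ((\<lambda>i. - (c (\<phi> i) / \<kappa>)) i) (\<phi> i)) \<notin> I"
      proof (rule indep_claim)
        show "finite (A - {j})" using assms(1) by simp
        show "\<forall>i\<in>A - {j}. ismax (\<phi> i)" using assms(2) by blast
        show "inj_on (\<lambda>i. Lb (\<phi> i)) (A - {j})" using assms(3) by (rule inj_on_subset) blast
        show "\<forall>i\<in>A - {j}. Lb (\<phi> i) \<noteq> Lb (\<phi> j)" using assms(3) j(1) by (auto simp: inj_on_def)
        show "ismax (\<phi> j)" using assms(2) j(1) by blast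
      qed
      ultimately show False by contradiction
    qed
  qed
  then show ?thesis using inj by (simp add: card_image)
qed

end


definition lin :: "complex \<Rightarrow> complex \<Rightarrow> complex \<Rightarrow> complex \<Rightarrow> pol" where
  "lin a b c d = cscale a (Y 0) + cscale b (Y 1) + cscale c (Y 2) + cscale d (Y 3)"

definition ls :: "complex \<Rightarrow> pol" where "ls t = lin 1 t (t^2) (t^3)"

lemma lin_forms: "lin a b c d \<in> forms 1"
  unfolding lin_def by (intro forms_add forms_cscale Y_forms)

lemma ls_forms: "ls t \<in> forms 1"
  unfolding ls_def by (rule lin_forms)

lemma lin_comb: "cscale p (lin a b c d) + cscale q (lin a' b' c' d')
   = lin (p*a+q*a') (p*b+q*b') (p*c+q*c') (p*d+q*d')"
  by (simp add: lin_def V.scale_right_distrib V.scale_left_distrib algebra_simps)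

lemma lin_step:
  assumes L: "V.subspace L" and "lin a b c d \<in> L" "lin a' b' c' d' \<in> L"
    and "a'' = p*a+q*a'" "b'' = p*b+q*b'" "c'' = p*c+q*c'" "d'' = p*d+q*d'"
  shows "lin a'' b'' c'' d'' \<in> L"
proof -
  have "cscale p (lin a b c d) + cscale q (lin a' b' c' d') \<in> L"
    using assms(2,3) by (intro V.subspace_add[OF L] V.subspace_scale[OF L])
  then show ?thesis using assms(4-7) by (simp add: lin_comb)
qed

lemma divlem: fixes k :: complex assumes "k * (x - y) = 1" "A - B = (x - y) * E"
  shows "E = k * A + - k * B"
proof -
  have "k * A + - k * B = k * (A - B)" by (simp add: algebra_simps)
  also have "\<dots> = (k * (x - y)) * E" using assms(2) by simp
  finally show ?thesis using assms(1) by simp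
qed

lemma vander:
  assumes L: "V.subspace L"
    and d: "p \<noteq> q" "p \<noteq> r" "p \<noteq> w" "q \<noteq> r" "q \<noteq> w" "r \<noteq> w"
    and in4: "ls p \<in> L" "ls q \<in> L" "ls r \<in> L" "ls w \<in> L"
  shows "Y i \<in> L"
proof -
  have D1: "lin 0 1 (x+y) (x^2+x*y+y^2) \<in> L" if "x \<noteq> y" "ls x \<in> L" "ls y \<in> L" for x y
  proof (rule lin_step[OF L that(2,3)[unfolded ls_def], where p="1/(x-y)" and q="-(1/(x-y))"])
    have k: "1/(x-y) * (x - y) = 1" using that(1) by simp
    show "0 = 1 / (x - y) * 1 + - (1 / (x - y)) * 1" by simp
    show "1 = 1 / (x - y) * x + - (1 / (x - y)) * y" by (rule divlem[OF k]) simp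
    show "x + y = 1 / (x - y) * x^2 + - (1 / (x - y)) * y^2"
      by (rule divlem[OF k]) (simp add: algebra_simps power2_eq_square)
    show "x^2 + x*y + y^2 = 1 / (x - y) * x^3 + - (1 / (x - y)) * y^3"
      by (rule divlem[OF k]) (simp add: algebra_simps power2_eq_square power3_eq_cube)
  qed
  have D2: "lin 0 0 1 (x+y+z) \<in> L" if "x \<noteq> z"
    "lin 0 1 (x+y) (x^2+x*y+y^2) \<in> L" "lin 0 1 (y+z) (y^2+y*z+z^2) \<in> L" for x y z
  proof (rule lin_step[OF L that(2,3), where p="1/(x-z)" and q="-(1/(x-z))"])
    have k: "1/(x-z) * (x - z) = 1" using that(1) by simp
    show "0 = 1 / (x - z) * 0 + - (1 / (x - z)) * 0" by simp
    show "0 = 1 / (x - z) * 1 + - (1 / (x - z)) * 1" by simp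
    show "1 = 1 / (x - z) * (x + y) + - (1 / (x - z)) * (y + z)" by (rule divlem[OF k]) simp
    show "x + y + z = 1 / (x - z) * (x^2 + x*y + y^2) + - (1 / (x - z)) * (y^2 + y*z + z^2)"
      by (rule divlem[OF k]) (simp add: algebra_simps power2_eq_square)
  qed
  have pq: "lin 0 1 (p+q) (p^2+p*q+q^2) \<in> L" using D1 d in4 by blast
  have qr: "lin 0 1 (q+r) (q^2+q*r+r^2) \<in> L" using D1 d in4 by blast
  have rw: "lin 0 1 (r+w) (r^2+r*w+w^2) \<in> L" using D1 d in4 by blast
  have pqr: "lin 0 0 1 (p+q+r) \<in> L" using D2[OF d(2) pq qr] .
  have qrw: "lin 0 0 1 (q+r+w) \<in> L" using D2[OF d(5) qr rw] .
  have Y3: "lin 0 0 0 1 \<in> L"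
  proof (rule lin_step[OF L pqr qrw, where p="1/(p-w)" and q="-(1/(p-w))"])
    have k: "1/(p-w) * (p - w) = 1" using d(3) by simp
    show "(0::complex) = 1 / (p - w) * 0 + - (1 / (p - w)) * 0" by simp
    show "(0::complex) = 1 / (p - w) * 0 + - (1 / (p - w)) * 0" by simp
    show "0 = 1 / (p - w) * 1 + - (1 / (p - w)) * 1" by simp
    show "1 = 1 / (p - w) * (p + q + r) + - (1 / (p - w)) * (q + r + w)" by (rule divlem[OF k]) simp
  qed
  have Y2: "lin 0 0 1 0 \<in> L"
    by (rule lin_step[OF L pqr Y3, where p=1 and q="-(p+q+r)"]) simp_all
  have Y1a: "lin 0 1 0 (p^2+p*q+q^2) \<in> L"
    by (rule lin_step[OF L pq Y2, where p=1 and q="-(p+q)"]) simp_all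
  have Y1: "lin 0 1 0 0 \<in> L"
    by (rule lin_step[OF L Y1a Y3, where p=1 and q="-(p^2+p*q+q^2)"]) simp_all
  have Y0a: "lin 1 0 (p^2) (p^3) \<in> L"
    by (rule lin_step[OF L in4(1)[unfolded ls_def] Y1, where p=1 and q="-p"]) simp_all
  have Y0b: "lin 1 0 0 (p^3) \<in> L"
    by (rule lin_step[OF L Y0a Y2, where p=1 and q="-(p^2)"]) simp_all
  have Y0: "lin 1 0 0 0 \<in> L"
    by (rule lin_step[OF L Y0b Y3, where p=1 and q="-(p^3)"]) simp_all
  have "Y 0 \<in> L" "Y 1 \<in> L" "Y 2 \<in> L" "Y 3 \<in> L"
    using Y0 Y1 Y2 Y3 by (simp_all add: lin_def)
  then show ?thesis using exhaust4[of i] by auto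
qed


lemma four_distinct:
  assumes "finite X" "\<not> card X \<le> 3"
  obtains a b c e where "a \<in> X" "b \<in> X" "c \<in> X" "e \<in> X"
    "a \<noteq> b" "a \<noteq> c" "a \<noteq> e" "b \<noteq> c" "b \<noteq> e" "c \<noteq> e"
proof -
  have h0: "Suc 3 \<le> card X" using assms(2) by simp
  obtain a X1 where 1: "X = insert a X1" "a \<notin> X1" "3 \<le> card X1" "finite X1"
    using card_le_Suc_iff[THEN iffD1, OF h0] by blast
  have h1: "Suc 2 \<le> card X1" using 1(3) by simp
  obtain b X2 where 2: "X1 = insert b X2" "b \<notin> X2" "2 \<le> card X2" "finite X2"
    using card_le_Suc_iff[THEN iffD1, OF h1] by blast
  have h2: "Suc 1 \<le> card X2" using 2(3) by simp
  obtain c X3 where 3: "X2 = insert c X3" "c \<notin> X3" "1 \<le> card X3" "finite X3"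
    using card_le_Suc_iff[THEN iffD1, OF h2] by blast
  have h3: "Suc 0 \<le> card X3" using 3(3) by simp
  obtain e X4 where 4: "X3 = insert e X4" "e \<notin> X4"
    using card_le_Suc_iff[THEN iffD1, OF h3] by blast
  show ?thesis by (rule that[of a b c e]) (use 1(1,2) 2(1,2) 3(1,2) 4 in blast)+
qed

context SI begin

lemma fiber_bound:
  assumes "b0 \<notin> I" "finite T" "\<forall>t\<in>T. ls (of_nat t) \<in> Lb b0"
  shows "card T \<le> 3"
proof (rule ccontr)
  assume nc: "\<not> card T \<le> 3"
  obtain a b c e where abce: "a \<in> T" "b \<in> T" "c \<in> T" "e \<in> T"
    "a \<noteq> b" "a \<noteq> c" "a \<noteq> e" "b \<noteq> c" "b \<noteq> e" "c \<noteq> e"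
    by (rule four_distinct[OF assms(2) nc])
  have "Y i \<in> Lb b0" for i
    by (rule vander[OF Lb_sub, of "of_nat a" "of_nat b" "of_nat c" "of_nat e"]) (use abce assms(3) in auto)
  then have "Y i * b0 \<in> I" for i by (simp add: Lb_def)
  then have "b0 \<in> I" by (rule sat1[OF sat])
  then show False using assms(1) by contradiction
qed

lemma nzd_exists:
  assumes stab: "\<forall>D\<ge>d0. cdim (forms D) - cdim (I \<inter> forms D) = n"
  shows "\<exists>t::nat. \<forall>g\<in>forms d. ls (of_nat t) * g \<in> I \<longrightarrow> g \<in> I"
proof (rule ccontr)
  assume "\<not> ?thesis"
  then have "\<forall>t::nat. \<exists>g. g \<in> forms d \<and> ls (of_nat t) * g \<in> I \<and> g \<notin> I" by blast
  from choice[OF this] obtain a where a0: "\<forall>t::nat. a t \<in> forms d \<and> ls (of_nat t) * a t \<in> I \<and> a t \<notin> I" by blast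
  have a: "a t \<in> forms d \<and> ls (of_nat t) * a t \<in> I \<and> a t \<notin> I" for t using a0 by blast
  have "\<forall>t. \<exists>b. ismax b \<and> Lb (a t) \<subseteq> Lb b"
    using a exmax by (auto simp: FF_def)
  from choice[OF this] obtain b0 where b00: "\<forall>t. ismax (b0 t) \<and> Lb (a t) \<subseteq> Lb (b0 t)" by blast
  have b0: "ismax (b0 t) \<and> Lb (a t) \<subseteq> Lb (b0 t)" for t using b00 by blast
  have "\<forall>t. \<exists>e. b0 t \<in> forms e" using b0 ismax_FF by (auto simp: FF_def)
  from choice[OF this] obtain e where e0: "\<forall>t. b0 t \<in> forms (e t)" by blast
  have e: "b0 t \<in> forms (e t)" for t using e0 by blast
  define N where "N = 3 * n + 1"
  define D' where "D' = max d0 (Max (e ` {..<N}))"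
  have eD: "e t \<le> D'" if "t < N" for t
  proof -
    have "e t \<le> Max (e ` {..<N})" using that by (intro Max_ge) auto
    then show ?thesis by (simp add: D'_def)
  qed
  have "\<forall>t. \<exists>b. t < N \<longrightarrow> ismax b \<and> b \<in> forms D' \<and> Lb b = Lb (b0 t)"
    using moveup b0 e eD by blast
  from choice[OF this] obtain b where b00: "\<forall>t. t < N \<longrightarrow> ismax (b t) \<and> b t \<in> forms D' \<and> Lb (b t) = Lb (b0 t)" by blast
  have b: "ismax (b t) \<and> b t \<in> forms D' \<and> Lb (b t) = Lb (b0 t)" if "t < N" for t using b00 that by blast
  have lsb: "ls (of_nat t) \<in> Lb (b t)" if "t < N" for t
    using a[of t] b0[of t] b[OF that] ls_forms by (auto simp: Lb_def)
  define Ls where "Ls = (\<lambda>t. Lb (b t)) ` {..<N}"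
  define rep where "rep L = (SOME t. t < N \<and> Lb (b t) = L)" for L
  have rep: "rep L < N \<and> Lb (b (rep L)) = L" if "L \<in> Ls" for L
    unfolding rep_def by (rule someI_ex) (use that in \<open>auto simp: Ls_def\<close>)
  define A where "A = rep ` Ls"
  have fLs: "finite Ls" by (simp add: Ls_def)
  have injrep: "inj_on rep Ls"
  proof (rule inj_onI)
    fix L L' assume l: "L \<in> Ls" and l': "L' \<in> Ls" and eq: "rep L = rep L'"
    have "L = Lb (b (rep L))" using rep[OF l] by simp
    also have "\<dots> = Lb (b (rep L'))" by (simp only: eq)
    also have "\<dots> = L'" using rep[OF l'] by simp
    finally show "L = L'" .
  qed
  have A1: "finite A" using fLs by (simp add: A_def)
  have A2: "\<forall>i\<in>A. ismax (b i)"
  proof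
    fix i assume "i \<in> A"
    then obtain L where "L \<in> Ls" "i = rep L" by (auto simp: A_def)
    then show "ismax (b i)" using rep b by blast
  qed
  have A3: "inj_on (\<lambda>i. Lb (b i)) A"
  proof (rule inj_onI)
    fix i j assume "i \<in> A" "j \<in> A" and eq: "Lb (b i) = Lb (b j)"
    then obtain L L' where L: "L \<in> Ls" "i = rep L" "L' \<in> Ls" "j = rep L'" by (auto simp: A_def)
    have "L = Lb (b i)" using rep[OF L(1)] L(2) by simp
    also have "\<dots> = Lb (b j)" by (rule eq)
    also have "\<dots> = L'" using rep[OF L(3)] L(4) by simp
    finally show "i = j" using L(2,4) by simp
  qed
  note A = A1 A2 A3
  have cA: "card A = card Ls" using injrep by (simp add: A_def card_image)
  have "indep_mod I (b ` A) \<and> card (b ` A) = card A" by (rule indep_set[OF A])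
  moreover have "b ` A \<subseteq> forms D'"
  proof
    fix x assume "x \<in> b ` A"
    then obtain L where "L \<in> Ls" "x = b (rep L)" by (auto simp: A_def)
    then show "x \<in> forms D'" using rep b by blast
  qed
  ultimately have "card A + cdim (I \<inter> forms D') \<le> cdim (forms D')"
    using quot_bound[OF Isub, of "b ` A" D'] A(1) by simp
  moreover have "cdim (forms D') - cdim (I \<inter> forms D') = n" using stab by (simp add: D'_def)
  ultimately have cLs: "card Ls \<le> n" using cA by linarith
  define fib where "fib L = {t \<in> {..<N}. Lb (b t) = L}" for L
  have "{..<N} = (\<Union>L\<in>Ls. fib L)" by (auto simp: fib_def Ls_def)
  then have "card {..<N} \<le> (\<Sum>L\<in>Ls. card (fib L))" using card_UN_le[OF fLs, of fib] by simp
  also have "\<dots> \<le> (\<Sum>L\<in>Ls. 3)"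
  proof (rule sum_mono)
    fix L assume L: "L \<in> Ls"
    have rL: "rep L < N" "Lb (b (rep L)) = L" using rep[OF L] by auto
    have "ismax (b (rep L))" using b[OF rL(1)] by blast
    then have nI: "b (rep L) \<notin> I" using ismax_FF unfolding FF_def by blast
    have inL: "\<forall>t\<in>fib L. ls (of_nat t) \<in> Lb (b (rep L))"
    proof
      fix t assume "t \<in> fib L"
      then have t: "t < N" "Lb (b t) = L" by (auto simp: fib_def)
      show "ls (of_nat t) \<in> Lb (b (rep L))" using lsb[OF t(1)] t(2) rL(2) by simp
    qed
    have "finite (fib L)" by (simp add: fib_def)
    then show "card (fib L) \<le> 3" using fiber_bound nI inL by blast
  qed
  also have "\<dots> = 3 * card Ls" by simp
  finally have "N \<le> 3 * card Ls" by simp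
  then show False using cLs by (simp add: N_def)
qed

lemma h_mono:
  assumes stab: "\<forall>D\<ge>d0. cdim (forms D) - cdim (I \<inter> forms D) = n"
  shows "cdim (forms d) - cdim (I \<inter> forms d) \<le> cdim (forms (Suc d)) - cdim (I \<inter> forms (Suc d))"
proof -
  obtain t :: nat where "\<forall>g\<in>forms d. ls (of_nat t) * g \<in> I \<longrightarrow> g \<in> I"
    using nzd_exists[OF stab] by blast
  then show ?thesis by (rule mono_step[OF hom ls_forms])
qed

end


theorem lemma4p2:
  fixes f :: pol and I\<Gamma> :: "pol set"
  assumes "f \<in> forms 4"
    and "\<forall>g\<in>forms 2. contract g f = 0 \<longrightarrow> g = 0"
    and "scheme_ideal_of_length 10 I\<Gamma>"
    and "I\<Gamma> \<subseteq> perp f"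
  shows "cdim (I\<Gamma> \<inter> forms 3) = 10"
proof -
  have hom: "homogeneous_ideal I\<Gamma>" and sat: "saturated I\<Gamma>"
    and st: "\<exists>d0. \<forall>d\<ge>d0. cdim (forms d) - cdim (I\<Gamma> \<inter> forms d) = 10"
    using assms(3) unfolding scheme_ideal_of_length_def by blast+
  interpret SI I\<Gamma> using hom sat by unfold_locales
  obtain d0 where d0: "\<forall>d\<ge>d0. cdim (forms d) - cdim (I\<Gamma> \<inter> forms d) = 10" using st by blast
  define h where "h d = cdim (forms d) - cdim (I\<Gamma> \<inter> forms d)" for d
  have hm: "h d \<le> h (Suc d)" for d unfolding h_def by (rule h_mono[OF d0])
  have chain: "h 3 \<le> h (3 + k)" for k
  proof (induction k)
    case 0 then show ?case by simp
  next
    case (Suc k)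
    then show ?case using hm[of "3 + k"] by simp
  qed
  have "h (3 + d0) = 10" using d0 by (simp add: h_def)
  then have h3: "h 3 \<le> 10" using chain[of d0] by simp
  have I2: "I\<Gamma> \<inter> forms 2 = {0}"
  proof
    show "I\<Gamma> \<inter> forms 2 \<subseteq> {0}" using assms(2,4) by (auto simp: perp_def)
    show "{0} \<subseteq> I\<Gamma> \<inter> forms 2" using V.subspace_0[OF Isub] forms_zero by auto
  qed
  have "cdim {0} = 0" unfolding cdim_def
    using V.dim_span[of "{}"] V.dim_eq_card_independent[OF V.independent_empty] by simp
  then have "h 2 = 10" using I2 by (simp add: h_def cdim_forms card_monos2)
  then have "h 3 = 10" using hm[of 2] h3 by simp
  then show ?thesis by (simp add: h_def cdim_forms card_monos3)
qed

end
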